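(* Let $x,y,z$ be nodes of a finite, connected, unweighted, undirected graph and let $m$ be a generalized median of $\{x,y,z\}$. Then for every node $p\in I_{xm}$, $d(y,p)\geq d(y,m)$.
   Context: $d$ is the shortest-path distance; $I_{xm}=\{w: d(x,w)+d(w,m)=d(x,m)\}$. A generalized median of $\{x,y,z\}$ is a node minimizing $d(u,x)+d(u,y)+d(u,z)$ over all nodes $u$. *)

theory Defs
  imports Main
begin

definition graph :: "'a set \<Rightarrow> ('a \<Rightarrow> 'a \<Rightarrow> bool) \<Rightarrow> bool" where
  "graph V E \<longleftrightarrow> finite V \<and> (\<forall>u v. E u v \<longrightarrow> u \<in> V \<and> v \<in> V)
     \<and> (\<forall>u v. E u v \<longrightarrow> E v u) \<and> (\<forall>u. \<not> E u u)"

definition walk :: "('a \<Rightarrow> 'a \<Rightarrow> bool) \<Rightarrow> 'a list \<Rightarrow> bool" where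
  "walk E xs \<longleftrightarrow> xs \<noteq> [] \<and> (\<forall>i. Suc i < length xs \<longrightarrow> E (xs ! i) (xs ! Suc i))"

definition connected_graph :: "'a set \<Rightarrow> ('a \<Rightarrow> 'a \<Rightarrow> bool) \<Rightarrow> bool" where
  "connected_graph V E \<longleftrightarrow> V \<noteq> {} \<and>
     (\<forall>u\<in>V. \<forall>v\<in>V. \<exists>xs. walk E xs \<and> hd xs = u \<and> last xs = v)"

definition dist :: "('a \<Rightarrow> 'a \<Rightarrow> bool) \<Rightarrow> 'a \<Rightarrow> 'a \<Rightarrow> nat" where
  "dist E u v = (LEAST n. \<exists>xs. walk E xs \<and> hd xs = u \<and> last xs = v \<and> length xs = Suc n)"

definition interval :: "'a set \<Rightarrow> ('a \<Rightarrow> 'a \<Rightarrow> bool) \<Rightarrow> 'a \<Rightarrow> 'a \<Rightarrow> 'a set" where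
  "interval V E x m = {w \<in> V. dist E x w + dist E w m = dist E x m}"

definition generalized_median :: "'a set \<Rightarrow> ('a \<Rightarrow> 'a \<Rightarrow> bool) \<Rightarrow> 'a \<Rightarrow> 'a \<Rightarrow> 'a \<Rightarrow> 'a \<Rightarrow> bool" where
  "generalized_median V E x y z m \<longleftrightarrow> m \<in> V \<and>
     (\<forall>u\<in>V. dist E m x + dist E m y + dist E m z \<le> dist E u x + dist E u y + dist E u z)"

end

theory Submission
  imports Defs
begin

lemma walk_rev:
  assumes "walk E xs" "\<forall>u v. E u v \<longrightarrow> E v u"
  shows "walk E (rev xs)"
  unfolding walk_def
proof (intro conjI allI impI)
  show "rev xs \<noteq> []" using assms(1) by (simp add: walk_def)
  fix i assume i: "Suc i < length (rev xs)"
  let ?j = "length xs - Suc (Suc i)"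
  have "E (xs ! ?j) (xs ! Suc ?j)" using assms(1) i by (simp add: walk_def)
  moreover have "Suc ?j = length xs - Suc i" using i by simp
  ultimately show "E (rev xs ! i) (rev xs ! Suc i)"
    using i assms(2) by (simp add: rev_nth)
qed

lemma walk_append:
  assumes "walk E xs" "walk E ys" "last xs = hd ys"
  shows "walk E (xs @ tl ys)"
  unfolding walk_def
proof (intro conjI allI impI)
  show "xs @ tl ys \<noteq> []" using assms(1) by (simp add: walk_def)
  fix i assume i: "Suc i < length (xs @ tl ys)"
  have xs: "xs \<noteq> []" "ys \<noteq> []" using assms by (auto simp: walk_def)
  show "E ((xs @ tl ys) ! i) ((xs @ tl ys) ! Suc i)"
  proof (cases "Suc i < length xs")
    case True then show ?thesis using assms(1) by (simp add: walk_def nth_append)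
  next
    case False
    show ?thesis
    proof (cases "Suc i = length xs")
      case True
      then have ii: "i = length xs - 1" by simp
      have "(xs @ tl ys) ! i = last xs" using xs True by (simp add: nth_append last_conv_nth ii)
      moreover have "(xs @ tl ys) ! Suc i = ys ! 1" using True xs i by (simp add: nth_append nth_tl)
      moreover have "ys ! 0 = hd ys" using xs by (simp add: hd_conv_nth)
      moreover have "1 < length ys" using i True by simp
      ultimately show ?thesis using assms(2,3) unfolding walk_def by (metis One_nat_def)
    next
      case F2: False
      let ?k = "i - length xs"
      have "(xs @ tl ys) ! i = ys ! Suc ?k" using False F2 i by (simp add: nth_append nth_tl)
      moreover have "(xs @ tl ys) ! Suc i = ys ! Suc (Suc ?k)" using False F2 i
        by (simp add: nth_append nth_tl Suc_diff_le)
      moreover have "Suc (Suc ?k) < length ys" using i False F2 by simp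
      ultimately show ?thesis using assms(2) unfolding walk_def by simp
    qed
  qed
qed

lemma dist_ex:
  assumes "connected_graph V E" "u \<in> V" "v \<in> V"
  shows "\<exists>xs. walk E xs \<and> hd xs = u \<and> last xs = v \<and> length xs = Suc (dist E u v)"
proof -
  obtain xs where xs: "walk E xs" "hd xs = u" "last xs = v"
    using assms unfolding connected_graph_def by blast
  then have "xs \<noteq> []" by (simp add: walk_def)
  then have "\<exists>n. \<exists>xs. walk E xs \<and> hd xs = u \<and> last xs = v \<and> length xs = Suc n"
    using xs by (metis Suc_pred length_greater_0_conv)
  then show ?thesis unfolding dist_def by (rule LeastI_ex)
qed

lemma dist_le:
  assumes "walk E xs" "hd xs = u" "last xs = v" "length xs = Suc n"
  shows "dist E u v \<le> n"
  unfolding dist_def using assms by (blast intro: Least_le)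

lemma dist_sym:
  assumes "graph V E" "connected_graph V E" "u \<in> V" "v \<in> V"
  shows "dist E u v \<le> dist E v u"
proof -
  obtain xs where xs: "walk E xs" "hd xs = v" "last xs = u" "length xs = Suc (dist E v u)"
    using dist_ex assms by metis
  have s: "\<forall>u v. E u v \<longrightarrow> E v u" using assms(1) by (simp add: graph_def)
  have "xs \<noteq> []" using xs by (simp add: walk_def)
  then show ?thesis using dist_le[OF walk_rev[OF xs(1) s]] xs
    by (simp add: hd_rev last_rev)
qed

lemma dist_sym_eq:
  assumes "graph V E" "connected_graph V E" "u \<in> V" "v \<in> V"
  shows "dist E u v = dist E v u"
  using dist_sym[OF assms] dist_sym[OF assms(1,2,4,3)] by simp

lemma dist_tri:
  assumes "connected_graph V E" "u \<in> V" "v \<in> V" "w \<in> V"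
  shows "dist E u w \<le> dist E u v + dist E v w"
proof -
  obtain xs where xs: "walk E xs" "hd xs = u" "last xs = v" "length xs = Suc (dist E u v)"
    using dist_ex assms by metis
  obtain ys where ys: "walk E ys" "hd ys = v" "last ys = w" "length ys = Suc (dist E v w)"
    using dist_ex assms by metis
  have ne: "xs \<noteq> []" "ys \<noteq> []" using xs ys by (auto simp: walk_def)
  have "hd (xs @ tl ys) = u" using ne xs by simp
  moreover have "last (xs @ tl ys) = w"
  proof (cases "tl ys = []")
    case True
    then have "ys = [hd ys]" using ne by (metis list.collapse)
    then show ?thesis using True xs ys by (metis append_Nil2 last.simps)
  next
    case False
    then show ?thesis using ys ne by (metis last_appendR last_tl)
  qed
  moreover have "length (xs @ tl ys) = Suc (dist E u v + dist E v w)" using xs ys by simp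
  ultimately show ?thesis using dist_le walk_append[OF xs(1) ys(1)] xs ys by metis
qed

theorem lemmaE3:
  fixes V :: "'a set" and E :: "'a \<Rightarrow> 'a \<Rightarrow> bool" and x y z m p :: 'a
  assumes "graph V E" and "connected_graph V E"
    and "x \<in> V" and "y \<in> V" and "z \<in> V"
    and "generalized_median V E x y z m"
    and "p \<in> interval V E x m"
  shows "dist E y p \<ge> dist E y m"
proof -
  have mV: "m \<in> V" and med: "dist E m x + dist E m y + dist E m z \<le> dist E p x + dist E p y + dist E p z"
    and pV: "p \<in> V" and I: "dist E x p + dist E p m = dist E x m"
    using assms(6,7) by (auto simp: generalized_median_def interval_def)
  have s1: "dist E p x = dist E x p" "dist E m x = dist E x m" "dist E p y = dist E y p"
    "dist E m y = dist E y m"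
    using dist_sym_eq[OF assms(1,2)] pV mV assms(3,4) by auto
  have t: "dist E p z \<le> dist E p m + dist E m z" using dist_tri[OF assms(2) pV mV assms(5)] .
  show ?thesis using med s1 t I by linarith
qed

end
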